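(* For each positive integer $\ell$ let $k_\ell>0$, and suppose $\lim_{\ell\to\infty}\ell e^{-\delta k_\ell}=0$ for every $\delta>0$. Let $A>0$, $B>0$, $\bar w\ge1$ be constants. Let $\{a_\ell\}$, $\{b_\ell\}$ be sequences with $b_\ell\le a_\ell$, $\lim_{\ell\to\infty}k_\ell/a_\ell=a\in[0,\infty)$ and $\lim_{\ell\to\infty}k_\ell/b_\ell=b\in(0,\infty)$, and let $\{A_\ell\}$ satisfy $\liminf_{\ell\to\infty}A_\ell=A$. Define on $[0,a_\ell]$ $$h_\ell(w)=A_\ell\log(1+Bw)-\frac{a_\ell}{k_\ell}H_2\Big(\frac w{a_\ell}\Big).$$ Let $w_\ell^*$ be a point achieving the global minimum of $h_\ell$ restricted to $[\bar w,b_\ell]$. Then for all sufficiently large $\ell$, either $w_\ell^*=\bar w$ or $w_\ell^*\in[cb_\ell,b_\ell]$, where $c=\min\Big\{\frac{bA}{64(1+Aa)},1\Big\}$.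
   Context: Logarithms are natural; $H_2(p)=-p\log p-(1-p)\log(1-p)$ for $p\in[0,1]$. *)

theory Defs
  imports "HOL-Analysis.Analysis"
begin

text \<open>Binary entropy with natural logarithms; in Isabelle ln 0 = 0, so 0 * ln 0 = 0.\<close>
definition H2 :: "real \<Rightarrow> real" where
  "H2 p = - p * ln p - (1 - p) * ln (1 - p)"

definition hfun :: "real \<Rightarrow> real \<Rightarrow> real \<Rightarrow> real \<Rightarrow> real \<Rightarrow> real" where
  "hfun Al B al kl w = Al * ln (1 + B * w) - (al / kl) * H2 (w / al)"

end

theory Submission imports Defs begin

definition h1 :: "real \<Rightarrow> real \<Rightarrow> real \<Rightarrow> real \<Rightarrow> real \<Rightarrow> real" where
  "h1 Al B a k x = Al * B / (1 + B * x) - (ln (1 - x / a) - ln (x / a)) / k"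
definition h2 :: "real \<Rightarrow> real \<Rightarrow> real \<Rightarrow> real \<Rightarrow> real \<Rightarrow> real" where
  "h2 Al B a k x = - Al * B^2 / (1 + B * x)^2 + (1 / (a - x) + 1 / x) / k"

lemma deriv_h:
  assumes "0 < x" "x < a" "B > 0" "k > 0"
  shows "DERIV (hfun Al B a k) x :> h1 Al B a k x"
proof -
  have a: "a > 0" using assms by linarith
  have p1: "1 + B * x > 0" using assms by (simp add: add_pos_pos)
  have p2: "x / a > 0" "1 - x/a > 0" using assms a by (auto simp: field_simps)
  have "((\<lambda>w. Al * ln (1 + B * w) - (a / k) * (- (w/a) * ln (w/a) - (1 - w/a) * ln (1 - w/a)))
     has_real_derivative h1 Al B a k x) (at x)"
    using assms a p1 p2 apply (auto intro!: derivative_eq_intros)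
    using a p1 apply (simp add: h1_def divide_simps)
    done
  then show ?thesis unfolding hfun_def H2_def by (simp add: fun_eq_iff)
qed

lemma deriv_h1:
  assumes "0 < x" "x < a" "B > 0" "k > 0"
  shows "DERIV (h1 Al B a k) x :> h2 Al B a k x"
proof -
  have a: "a > 0" using assms by linarith
  have p1: "1 + B * x > 0" using assms by (simp add: add_pos_pos)
  have p2: "x / a > 0" "1 - x/a > 0" using assms a by (auto simp: field_simps)
  have "((\<lambda>x. Al * B / (1 + B * x) - (ln (1 - x / a) - ln (x / a)) / k)
     has_real_derivative h2 Al B a k x) (at x)"
    using assms a p1 p2 apply (auto intro!: derivative_eq_intros)
    apply (simp add: h2_def field_simps power2_eq_square)
    done
  then show ?thesis unfolding h1_def by (simp add: fun_eq_iff)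
qed

lemma core:
  assumes B: "B > 0" and k: "k > 0" and wb: "wbar > 0"
    and o: "wbar < ws" "ws < w'" "w' < a"
    and neg: "\<And>x. wbar \<le> x \<Longrightarrow> x \<le> w' \<Longrightarrow> h2 Al B a k x < 0"
    and mn: "\<And>w. wbar \<le> w \<Longrightarrow> w \<le> w' \<Longrightarrow> hfun Al B a k ws \<le> hfun Al B a k w"
  shows False
proof -
  let ?h = "hfun Al B a k"
  have D: "\<And>x. wbar \<le> x \<Longrightarrow> x \<le> w' \<Longrightarrow> DERIV ?h x :> h1 Al B a k x"
    using deriv_h[OF _ _ B k] wb o by force
  have D1: "\<And>x. wbar \<le> x \<Longrightarrow> x \<le> w' \<Longrightarrow> DERIV (h1 Al B a k) x :> h2 Al B a k x"
    using deriv_h1[OF _ _ B k] wb o by force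
  obtain z1 where z1: "wbar < z1" "z1 < ws" "?h ws - ?h wbar = (ws - wbar) * h1 Al B a k z1"
    using MVT2[of wbar ws ?h "h1 Al B a k"] D o by force
  obtain z2 where z2: "ws < z2" "z2 < w'" "?h w' - ?h ws = (w' - ws) * h1 Al B a k z2"
    using MVT2[of ws w' ?h "h1 Al B a k"] D o by force
  have "?h ws \<le> ?h wbar" "?h ws \<le> ?h w'" using mn o by auto
  hence "(ws - wbar) * h1 Al B a k z1 \<le> 0" "(w' - ws) * h1 Al B a k z2 \<ge> 0" using z1 z2 by auto
  hence c1: "h1 Al B a k z1 \<le> 0" and c2: "h1 Al B a k z2 \<ge> 0" using o
    by (auto simp: mult_le_0_iff zero_le_mult_iff)
  have "h1 Al B a k z2 < h1 Al B a k z1"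
    apply (rule DERIV_neg_imp_decreasing[of z1 z2])
    using z1 z2 apply simp
    subgoal for x
      apply (rule exI[of _ "h2 Al B a k x"])
      using z1 z2 D1[of x] neg[of x] by auto
    done
  with c1 c2 show False by simp
qed

lemma h2_neg:
  assumes "Al * B^2 * x * (a - x) * k > a * (1 + B * x)^2" "0 < x" "x < a" "B > 0" "k > 0"
  shows "h2 Al B a k x < 0"
proof -
  have p: "1 + B * x > 0" using assms by (simp add: add_pos_pos)
  have e: "(1 / (a - x) + 1 / x) / k = a / (k * x * (a - x))" using assms by (simp add: field_simps)
  have "a / (k * x * (a - x)) < Al * B^2 / (1 + B * x)^2"
    using assms p by (simp add: divide_simps mult_ac)
  thus ?thesis unfolding h2_def e by simp
qed
lemma pos_cond:
  fixes A B x a k Al :: real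
  assumes A: "A > 0" and B: "B > 0" and x1: "1 \<le> x" and xa: "16 * x < a"
    and xk: "16 * x < A * k" and Al: "Al > A / 2" and kB: "k > 16 / (A * B^2)"
  shows "Al * B^2 * x * (a - x) * k > a * (1 + B * x)^2"
proof -
  have a: "a > 0" using xa x1 by linarith
  have AB: "A * B^2 > 0" using A B by simp
  have "16 / (A * B^2) > 0" using AB by simp
  hence k: "k > 0" using kB by linarith
  have ax: "a - x > 15 * a / 16" using xa by linarith
  have Alk: "Al * (a - x) * k > (A/2) * (15 * a / 16) * k"
    using Al ax A a k by (intro mult_strict_right_mono mult_strict_mono) auto
  have e1: "(A/2) * (15 * a / 16) * k = (15/32) * a * (A * k)" by simp
  show ?thesis
  proof (cases "B * x \<ge> 1")
    case True
    have "(1 + B * x)^2 \<le> (2 * (B * x))^2"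
      by (rule power_mono) (use True B x1 in auto)
    hence sq: "(1 + B * x)^2 \<le> 4 * (B * x)^2" by (simp add: power_mult_distrib)
    have "4 * x < (15/32) * (A * k)" using xk x1 by linarith
    hence "a * (4 * x) < a * ((15/32) * (A * k))" using a by (intro mult_strict_left_mono) auto
    moreover have "a * (4 * x) = 4 * a * x" "a * ((15/32) * (A * k)) = (A/2) * (15 * a / 16) * k" by (simp_all add: mult_ac)
    ultimately have "4 * a * x < (A/2) * (15 * a / 16) * k" by (simp add: mult_ac)
    hence "4 * a * x < Al * (a - x) * k" using Alk by linarith
    hence "B^2 * x * (4 * a * x) < B^2 * x * (Al * (a - x) * k)"
      using B x1 by (intro mult_strict_left_mono) auto
    moreover have "a * (1 + B * x)^2 \<le> a * (4 * (B * x)^2)"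
      using sq a by (intro mult_left_mono) auto
    moreover have "a * (4 * (B * x)^2) = B^2 * x * (4 * a * x)" by (simp add: power2_eq_square)
    ultimately show ?thesis by (simp add: mult_ac)
  next
    case False
    have "(1 + B * x)^2 < 2^2"
      by (rule power_strict_mono) (use False B x1 in auto)
    hence sq: "a * (1 + B * x)^2 < a * 4" using a by simp
    have "16 < k * (A * B^2)" using kB AB by (simp add: divide_less_eq)
    hence "a * 16 < a * (k * (A * B^2))" using a by simp
    moreover have "(A/2) * (15 * a / 16) * k * B^2 = (15/32) * (a * (k * (A * B^2)))" by (simp add: mult_ac)
    ultimately have "4 * a < (A/2) * (15 * a / 16) * k * B^2" using a by linarith
    also have "\<dots> < Al * (a - x) * k * B^2" by (rule mult_strict_right_mono[OF Alk]) (use B in simp)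
    also have "\<dots> \<le> Al * (a - x) * k * B^2 * x"
    proof -
      have "Al * (a - x) * k * B^2 > 0" using calculation a by linarith
      thus ?thesis using x1 by (simp add: mult_le_cancel_left1)
    qed
    finally show ?thesis using sq by (simp add: mult_ac)
  qed
qed

lemma step:
  fixes A B wbar a0 b0 Al a b k ws :: real
  assumes A: "A > 0" and B: "B > 0" and wb: "wbar \<ge> 1" and a0: "a0 \<ge> 0" and b0: "b0 > 0"
    and k: "k > 0" and b: "b > 0" and ba: "b \<le> a" and Al: "Al > A / 2"
    and kb: "k / b > b0 / 2" and ka: "k / a < a0 + 1 / A" and kB: "k > 16 / (A * B^2)"
    and ws: "wbar \<le> ws" "ws \<le> b"
    and mn: "\<forall>w\<in>{wbar..b}. hfun Al B a k ws \<le> hfun Al B a k w"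
  shows "ws = wbar \<or> (min (b0 * A / (64 * (1 + A * a0))) 1 * b \<le> ws \<and> ws \<le> b)"
proof (rule ccontr)
  assume H: "\<not> ?thesis"
  define C0 where "C0 = b0 * A / (64 * (1 + A * a0))"
  define c where "c = min C0 1"
  define d where "d = min (2 * c) 1"
  have aA: "1 + A * a0 > 0" using A a0 by (simp add: add_pos_nonneg)
  have C0: "C0 > 0" unfolding C0_def using A b0 aA by simp
  have c0: "c > 0" "c \<le> C0" "c \<le> 1" unfolding c_def using C0 by auto
  have d: "c \<le> d" "d \<le> 1" "d \<le> 2 * C0" using c0 unfolding d_def by auto
  have wsne: "ws \<noteq> wbar" and wsc: "ws < c * b" using H ws unfolding c_def C0_def by auto
  have o1: "wbar < ws" using wsne ws by simp
  have "c * b \<le> d * b" using d b by (intro mult_right_mono) auto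
  hence o2: "ws < d * b" using wsc by linarith
  have a: "a > 0" using b ba by simp
  have bk: "b0 * b < 2 * k" using kb b by (simp add: field_simps)
  have "d * b \<le> 2 * C0 * b" using d b by (simp add: mult_right_mono)
  also have "\<dots> = A * (b0 * b) / (32 * (1 + A * a0))" unfolding C0_def using aA by (simp add: field_simps)
  also have "\<dots> < A * (2 * k) / (32 * (1 + A * a0))" using bk A aA by (simp add: divide_strict_right_mono)
  also have "\<dots> = A * k / (16 * (1 + A * a0))" using aA by (simp add: field_simps)
  finally have w1: "d * b < A * k / (16 * (1 + A * a0))" .
  have "A * k / (1 + A * a0) \<le> A * k / 1"
    by (rule divide_left_mono) (use A k aA a0 mult_nonneg_nonneg[of A a0] in auto)
  hence q: "A * k / (1 + A * a0) \<le> A * k" by simp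
  have eq: "A * k / (16 * (1 + A * a0)) = (A * k / (1 + A * a0)) / 16" by simp
  define Q where "Q = A * k / (1 + A * a0)"
  have "d * b < Q / 16" using w1 unfolding eq Q_def .
  moreover have "Q \<le> A * k" using q unfolding Q_def .
  ultimately have wk: "16 * (d * b) < A * k" by linarith
  have "k < (a0 + 1 / A) * a" using ka a by (simp add: divide_less_eq)
  hence "A * k < A * ((a0 + 1 / A) * a)" by (rule mult_strict_left_mono) (use A in auto)
  moreover have "A * ((a0 + 1 / A) * a) = (1 + A * a0) * a" using A by (simp add: field_simps)
  ultimately have "A * k < (1 + A * a0) * a" by simp
  hence "A * k / (1 + A * a0) < a" using aA by (simp add: divide_less_eq mult.commute)
  hence "Q < a" unfolding Q_def .
  hence wa: "16 * (d * b) < a" using \<open>d * b < Q / 16\<close> by linarith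
  show False
  proof (rule core[of B k wbar ws "d * b" a Al])
    show "B > 0" "k > 0" "wbar > 0" "wbar < ws" "ws < d * b" using B k wb o1 o2 by auto
    show "d * b < a" using wa a by linarith
    fix x assume x: "wbar \<le> x" "x \<le> d * b"
    show "h2 Al B a k x < 0"
    proof (rule h2_neg)
      show "Al * B\<^sup>2 * x * (a - x) * k > a * (1 + B * x)\<^sup>2"
        by (rule pos_cond[OF A B]) (use x wb wa wk Al kB in auto)
      show "0 < x" "x < a" "B > 0" "k > 0" using x wb wa B k by auto
    qed
  next
    fix w assume "wbar \<le> w" "w \<le> d * b"
    moreover have "d * b \<le> b" using d b by (simp add: mult_left_le_one_le)
    ultimately show "hfun Al B a k ws \<le> hfun Al B a k w" using mn by auto
  qed
qed
theorem lemma7: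
  fixes k a b As ws :: "nat \<Rightarrow> real"
    and A B wbar a0 b0 :: real
  assumes k_pos: "\<forall>l\<ge>1. k l > 0"
    and k_growth: "\<forall>\<delta>>0. (\<lambda>l. real l * exp (- \<delta> * k l)) \<longlonglongrightarrow> 0"
    and A_pos: "A > 0" and B_pos: "B > 0" and wbar: "wbar \<ge> 1"
    and ba: "\<forall>l\<ge>1. b l \<le> a l"
    and a_lim: "(\<lambda>l. k l / a l) \<longlonglongrightarrow> a0" and a0: "a0 \<ge> 0"
    and b_lim: "(\<lambda>l. k l / b l) \<longlonglongrightarrow> b0" and b0: "b0 > 0"
    and A_liminf: "liminf (\<lambda>l. ereal (As l)) = ereal A"
    and ws_min: "eventually (\<lambda>l. wbar \<le> ws l \<and> ws l \<le> b l \<and>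
                   (\<forall>w\<in>{wbar..b l}. hfun (As l) B (a l) (k l) (ws l) \<le> hfun (As l) B (a l) (k l) w))
                 sequentially"
  shows "eventually (\<lambda>l. ws l = wbar \<or>
           (min (b0 * A / (64 * (1 + A * a0))) 1 * b l \<le> ws l \<and> ws l \<le> b l)) sequentially"
proof -
  define M where "M = 16 / (A * B^2)"
  have e1: "eventually (\<lambda>l. k l > 0 \<and> b l \<le> a l) sequentially"
    using k_pos ba eventually_sequentially by blast
  have e2: "eventually (\<lambda>l. k l / b l > b0 / 2) sequentially"
    using order_tendstoD(1)[OF b_lim, of "b0 / 2"] b0 by linarith
  have e3: "eventually (\<lambda>l. k l / a l < a0 + 1 / A) sequentially"
    using order_tendstoD(2)[OF a_lim, of "a0 + 1 / A"] A_pos by simp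
  have "ereal A \<le> liminf (\<lambda>l. ereal (As l))" using A_liminf by simp
  hence "\<forall>y<ereal A. eventually (\<lambda>l. y < ereal (As l)) sequentially"
    unfolding le_Liminf_iff .
  moreover have "ereal (A / 2) < ereal A" using A_pos by simp
  ultimately have "eventually (\<lambda>l. ereal (A / 2) < ereal (As l)) sequentially"
    by blast
  hence e4: "eventually (\<lambda>l. As l > A / 2) sequentially"
    by (rule eventually_mono) simp
  have "eventually (\<lambda>l. real l * exp (- 1 * k l) < 1) sequentially"
    using order_tendstoD(2)[OF k_growth[rule_format, of 1], of 1] by simp
  moreover have "eventually (\<lambda>l. real l > exp M) sequentially"
    using filterlim_real_sequentially filterlim_at_top_dense by blast
  ultimately have e5: "eventually (\<lambda>l. k l > M) sequentially"
  proof eventually_elim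
    case (elim l)
    have "real l < exp (k l)" using elim(1) by (simp add: exp_minus field_simps)
    hence "exp M < exp (k l)" using elim(2) by linarith
    thus ?case by simp
  qed
  from e1 e2 e3 e4 e5 ws_min show ?thesis
  proof eventually_elim
    case (elim l)
    have "k l / b l > 0" using elim(2) b0 by linarith
    hence bp: "b l > 0" using elim(1) by (auto simp: zero_less_divide_iff)
    show ?case
      apply (rule step[OF A_pos B_pos wbar a0 b0, of "k l" "b l" "a l" "As l"])
      using elim bp unfolding M_def by auto
  qed
qed

end
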